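(* Let $N\in\mathbb{N}$, $a\ge 0$, $b>0$, and put $\alpha:=a+b-1$, $\beta:=b-1$. For $\kappa>0$ let $X_\kappa$ be an $\mathbb{R}^N$-valued random variable whose distribution $\mu_\kappa$ is the probability measure on the alcove $A:=\{x\in\mathbb{R}^N:\ -1\le x_1\le\dots\le x_N\le 1\}$ with Lebesgue density $$c_\kappa\prod_{1\le i<j\le N}(x_j-x_i)^{\kappa}\prod_{i=1}^N(1-x_i)^{\frac{\kappa(a+b)}{2}-\frac12}(1+x_i)^{\frac{\kappa b}{2}-\frac12},$$ where $c_\kappa>0$ is the normalizing constant. Let $z=(z_1,\dots,z_N)$ be the vector of the ordered zeros $z_1\le\dots\le z_N$ of the Jacobi polynomial $P_N^{(\alpha,\beta)}$; it lies in the interior of $A$. Then $X_\kappa\to z$ in probability as $\kappa\to\infty$.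
   Context: For $\alpha,\beta>-1$, $(P_n^{(\alpha,\beta)})_{n\ge0}$ denote the classical Jacobi polynomials, i.e. the orthogonal polynomials on $]-1,1[$ with respect to the weight $(1-x)^\alpha(1+x)^\beta$; $P_N^{(\alpha,\beta)}$ has degree $N$ and $N$ simple zeros in $]-1,1[$. *)

theory Defs
  imports "HOL-Probability.Probability" "HOL-Computational_Algebra.Polynomial"
begin

text \<open>Classical Jacobi polynomial (Szego normalisation):
  P_n^(al,be)(x) = sum_{s=0}^n binom(n+al, n-s) binom(n+be, s) ((x-1)/2)^s ((x+1)/2)^(n-s).\<close>
definition jacobi_poly :: "nat \<Rightarrow> real \<Rightarrow> real \<Rightarrow> real poly" where
  "jacobi_poly n al be =
     (\<Sum>s\<le>n. smult (((real n + al) gchoose (n - s)) * ((real n + be) gchoose s))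
                 ([:-1/2, 1/2:] ^ s * [:1/2, 1/2:] ^ (n - s)))"

text \<open>Lebesgue measure on R^N, points represented as functions on {..<N}.\<close>
abbreviation lborelN :: "nat \<Rightarrow> (nat \<Rightarrow> real) measure" where
  "lborelN N \<equiv> PiM {..<N} (\<lambda>_. lborel)"

definition alcove :: "nat \<Rightarrow> (nat \<Rightarrow> real) set" where
  "alcove N = {x. (\<forall>i<N. -1 \<le> x i \<and> x i \<le> 1) \<and> (\<forall>i j. i \<le> j \<and> j < N \<longrightarrow> x i \<le> x j)}"

definition jacobi_dens :: "nat \<Rightarrow> real \<Rightarrow> real \<Rightarrow> real \<Rightarrow> (nat \<Rightarrow> real) \<Rightarrow> real" where
  "jacobi_dens N a b \<kappa> x =
     indicator (alcove N) x *
     (\<Prod>j<N. \<Prod>i<j. (x j - x i) powr \<kappa>) *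
     (\<Prod>i<N. (1 - x i) powr (\<kappa> * (a + b) / 2 - 1/2) * (1 + x i) powr (\<kappa> * b / 2 - 1/2))"

definition jacobi_norm :: "nat \<Rightarrow> real \<Rightarrow> real \<Rightarrow> real \<Rightarrow> real" where
  "jacobi_norm N a b \<kappa> = enn2real (\<integral>\<^sup>+ x. ennreal (jacobi_dens N a b \<kappa> x) \<partial>lborelN N)"

definition jacobi_ensemble :: "nat \<Rightarrow> real \<Rightarrow> real \<Rightarrow> real \<Rightarrow> (nat \<Rightarrow> real) measure" where
  "jacobi_ensemble N a b \<kappa> =
     density (lborelN N) (\<lambda>x. ennreal (jacobi_dens N a b \<kappa> x / jacobi_norm N a b \<kappa>))"

end

theory Submission
  imports Defs
begin

definition uu :: "real poly" where "uu = [:-1/2, 1/2:]"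
definition vv :: "real poly" where "vv = [:1/2, 1/2:]"

lemma pd_uv: "pderiv (uu^s * vv^t) = smult (real s / 2) (uu^(s-1) * vv^t) + smult (real t / 2) (uu^s * vv^(t-1))"
  by (simp add: pderiv_mult pderiv_power uu_def vv_def pderiv_pCons algebra_simps)

lemma powm1: "(U::real) \<noteq> 0 \<Longrightarrow> real s * U^(s-1) = real s * U^s / U"
  by (cases s) auto

lemma powm2: "(U::real) \<noteq> 0 \<Longrightarrow> real s * real (s-1) * U^(s-1-1) = real s * (real s - 1) * U^s / U^2"
proof (cases s)
  case (Suc m) assume "U \<noteq> 0" then show ?thesis using Suc by (cases m) (auto simp: power2_eq_square)
qed auto

lemma poly_uu: "poly uu x = (x-1)/2" and poly_vv: "poly vv x = (x+1)/2"
  by (simp_all add: uu_def vv_def)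

lemma d1: assumes "(x-1)/2 \<noteq> 0" "(x+1)/2 \<noteq> 0"
  shows "poly (pderiv (uu^s * vv^t)) x = ((x-1)/2)^s * ((x+1)/2)^t * (real s / (2*((x-1)/2)) + real t/(2*((x+1)/2)))"
proof -
  define U where "U = (x-1)/2" 
  define V where "V = (x+1)/2"
  have U: "U \<noteq> 0" and V: "V \<noteq> 0" using assms by (auto simp: U_def V_def)
  have "poly (pderiv (uu^s * vv^t)) x = real s / 2 * (U^(s-1) * V^t) + real t / 2 * (U^s * V^(t-1))"
    by (simp add: pd_uv poly_uu poly_vv U_def V_def)
  also have "\<dots> = (real s * U^(s-1)) * V^t / 2 + (real t * V^(t-1)) * U^s / 2" by (simp add: algebra_simps)
  also have "\<dots> = U^s * V^t * (real s / (2*U) + real t/(2*V))"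
    unfolding powm1[OF U] powm1[OF V] using U V by (simp add: field_simps)
  finally show ?thesis by (simp add: U_def V_def)
qed

lemma d2: assumes "(x-1)/2 \<noteq> 0" "(x+1)/2 \<noteq> 0"
  shows "poly (pderiv (pderiv (uu^s * vv^t))) x = ((x-1)/2)^s * ((x+1)/2)^t *
     (real s * (real s - 1) / (4*((x-1)/2)^2) + 2 * real s * real t / (4*((x-1)/2)*((x+1)/2)) + real t * (real t - 1)/(4*((x+1)/2)^2))"
proof -
  define U where "U = (x-1)/2" 
  define V where "V = (x+1)/2"
  have U: "U \<noteq> 0" and V: "V \<noteq> 0" using assms by (auto simp: U_def V_def)
  have "poly (pderiv (pderiv (uu^s * vv^t))) x = 
     real s / 2 * (real (s-1) / 2 * (U^(s-1-1) * V^t) + real t / 2 * (U^(s-1) * V^(t-1))) +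
     real t / 2 * (real s / 2 * (U^(s-1) * V^(t-1)) + real (t-1) / 2 * (U^s * V^(t-1-1)))"
    by (simp add: pd_uv pderiv_add pderiv_smult poly_uu poly_vv U_def V_def)
  also have "\<dots> = (real s * real (s-1) * U^(s-1-1)) * V^t / 4 + (real s * U^(s-1)) * (real t * V^(t-1)) / 2
     + (real t * real (t-1) * V^(t-1-1)) * U^s / 4" by (simp add: algebra_simps)
  also have "\<dots> = U^s * V^t * (real s * (real s - 1) / (4*U^2) + 2 * real s * real t / (4*U*V) + real t * (real t - 1)/(4*V^2))"
    unfolding powm1[OF U] powm1[OF V] powm2[OF U] powm2[OF V] using U V by (simp add: field_simps power2_eq_square)
  finally show ?thesis by (simp add: U_def V_def)
qed

lemma term_id0:
  fixes U W al be S T :: real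
  assumes U: "U \<noteq> 0" and V: "W \<noteq> 0" and UW: "W = U + 1"
  shows "(-4*U*W) * (S * (S - 1) / (4*U^2) + 2 * S * T / (4*U*W) + T * (T - 1)/(4*W^2))
    + (be - al - (al+be+2)*(U+W)) * (S / (2*U) + T/(2*W))
    + (S+T) * ((S+T) + al + be + 1)
    = (- S * (S + al) / U + T * (T + be) / W)"
proof -
  have "(-4*U*W) * (S * (S - 1) / (4*U^2) + 2 * S * T / (4*U*W) + T * (T - 1)/(4*W^2))
    + (be - al - (al+be+2)*(U+W)) * (S / (2*U) + T/(2*W))
    + (S+T) * ((S+T) + al + be + 1) - (- S * (S + al) / U + T * (T + be) / W)
    = ((-4*U*W) * (S * (S - 1) * W^2 + 2 * S * T * U * W + T * (T - 1) * U^2)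
      + (be - al - (al+be+2)*(U+W)) * (2 * S * U * W^2 + 2 * T * U^2 * W)
      + 4 * U^2 * W^2 * (S+T) * ((S+T) + al + be + 1) - 4 * U * W^2 * (- S * (S + al)) - 4 * U^2 * W * (T * (T + be))) / (4*U^2*W^2)"
    using U V by (simp add: field_simps power2_eq_square)
  also have "\<dots> = 0" unfolding UW by (simp add: algebra_simps power2_eq_square)
  finally show ?thesis by simp
qed

lemma term_id:
  fixes U al be :: real and s t :: nat
  assumes U: "U \<noteq> 0" and V: "U + 1 \<noteq> 0"
  shows "(1 - (2*U+1)^2) * (U^s * (U+1)^t * (real s * (real s - 1) / (4*U^2) + 2 * real s * real t / (4*U*(U+1)) + real t * (real t - 1)/(4*(U+1)^2)))
    + (be - al - (al+be+2)*(2*U+1)) * (U^s * (U+1)^t * (real s / (2*U) + real t/(2*(U+1))))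
    + real (s+t) * (real (s+t) + al + be + 1) * (U^s * (U+1)^t)
    = U^s * (U+1)^t * (- real s * (real s + al) / U + real t * (real t + be) / (U+1))"
proof -
  define K where "K = U^s * (U+1)^t"
  define X where "X = real s * (real s - 1) / (4*U^2) + 2 * real s * real t / (4*U*(U+1)) + real t * (real t - 1)/(4*(U+1)^2)"
  define Y where "Y = real s / (2*U) + real t/(2*(U+1))"
  define C where "C = real (s+t) * (real (s+t) + al + be + 1)"
  define B where "B = be - al - (al+be+2)*(2*U+1)"
  have e: "1 - (2*U+1)^2 = -4*U*(U+1)" by (simp add: power2_eq_square algebra_simps)
  have h: "(-4*U*(U+1)) * X + B * Y + C = (- real s * (real s + al) / U + real t * (real t + be) / (U+1))"
  proof -
    have eq: "2*U+1 = U+(U+1)" by simp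
    show ?thesis unfolding X_def Y_def B_def C_def of_nat_add eq by (rule term_id0[OF U V refl])
  qed
  have gen: "A*(K*X) + B*(K*Y) + C*K = K*(A*X + B*Y + C)" for A :: real by (simp add: algebra_simps)
  show ?thesis unfolding e K_def[symmetric] X_def[symmetric] Y_def[symmetric] C_def[symmetric] B_def[symmetric] gen h ..
qed

definition cc :: "nat \<Rightarrow> real \<Rightarrow> real \<Rightarrow> nat \<Rightarrow> real" where
  "cc n al be s = ((real n + al) gchoose (n - s)) * ((real n + be) gchoose s)"

lemma jp_alt: "jacobi_poly n al be = (\<Sum>s\<le>n. smult (cc n al be s) (uu^s * vv^(n-s)))"
  by (simp add: jacobi_poly_def cc_def uu_def vv_def)

lemma gch: "of_nat (Suc k) * (a gchoose (Suc k)) = (a - of_nat k) * (a gchoose k)" for a :: real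
  using gbinomial_mult_1[of a k] by (simp add: algebra_simps)

lemma cc_rec: assumes "s < n"
  shows "cc n al be (Suc s) * (real (Suc s) * (real (Suc s) + al)) = cc n al be s * (real (n - s) * (real (n-s) + be))"
proof -
  obtain m where m: "n - s = Suc m" using assms by (cases "n - s") auto
  have nsm: "n - Suc s = m" using m by simp
  define A1 where "A1 = (real n + al) gchoose m"
  define A0 where "A0 = (real n + al) gchoose (Suc m)"
  define B0 where "B0 = (real n + be) gchoose s"
  define B1 where "B1 = (real n + be) gchoose (Suc s)"
  have r1: "real (Suc m) * A0 = (real n + al - real m) * A1" unfolding A0_def A1_def by (rule gch)
  have r2: "real (Suc s) * B1 = (real n + be - real s) * B0" unfolding B0_def B1_def by (rule gch)
  have e1: "real n + al - real m = real (Suc s) + al" using m assms by (simp add: of_nat_diff)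
  have e2: "real n + be - real s = real (n - s) + be" using assms by (simp add: of_nat_diff)
  have "cc n al be (Suc s) * (real (Suc s) * (real (Suc s) + al)) = ((real (Suc s) + al) * A1) * (real (Suc s) * B1)"
    unfolding cc_def nsm A1_def B1_def by (simp only: mult_ac)
  also have "\<dots> = (real (Suc m) * A0) * ((real n + be - real s) * B0)" using r1 r2 e1 by simp
  also have "\<dots> = cc n al be s * (real (n - s) * (real (n-s) + be))"
    unfolding cc_def m A0_def B0_def e2 by (simp only: mult_ac)
  finally show ?thesis .
qed

definition Lval :: "nat \<Rightarrow> real \<Rightarrow> real \<Rightarrow> real poly \<Rightarrow> real \<Rightarrow> real" where
  "Lval n al be P x = (1 - x^2) * poly (pderiv (pderiv P)) x + (be - al - (al+be+2)*x) * poly (pderiv P) x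
     + real n * (real n + al + be + 1) * poly P x"

lemma pderiv_sum': "pderiv (sum f A) = (\<Sum>a\<in>A. pderiv (f a))"
  by (induct A rule: infinite_finite_induct) (auto simp: pderiv_add)

lemma Lval_sum: "Lval n al be (\<Sum>s\<in>A. smult (c s) (p s)) x = (\<Sum>s\<in>A. c s * Lval n al be (p s) x)"
proof -
  have "Lval n al be (\<Sum>s\<in>A. smult (c s) (p s)) x =
    (1 - x^2) * (\<Sum>s\<in>A. c s * poly (pderiv (pderiv (p s))) x) + (be - al - (al+be+2)*x) * (\<Sum>s\<in>A. c s * poly (pderiv (p s)) x)
     + real n * (real n + al + be + 1) * (\<Sum>s\<in>A. c s * poly (p s) x)"
    unfolding Lval_def by (simp add: pderiv_sum' pderiv_smult poly_sum)
  also have "\<dots> = (\<Sum>s\<in>A. (1 - x^2) * (c s * poly (pderiv (pderiv (p s))) x) + (be - al - (al+be+2)*x) * (c s * poly (pderiv (p s)) x)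
     + real n * (real n + al + be + 1) * (c s * poly (p s) x))"
    by (simp add: sum_distrib_left sum.distrib)
  also have "\<dots> = (\<Sum>s\<in>A. c s * Lval n al be (p s) x)"
    by (rule sum.cong[OF refl]) (simp add: Lval_def algebra_simps)
  finally show ?thesis .
qed

lemma Lval_term:
  assumes "x \<noteq> 1" "x \<noteq> -1" "s \<le> n"
  shows "Lval n al be (uu^s * vv^(n-s)) x = ((x-1)/2)^s * ((x+1)/2)^(n-s) *
     (- real s * (real s + al) / ((x-1)/2) + real (n-s) * (real (n-s) + be) / ((x+1)/2))"
proof -
  define U where "U = (x-1)/2"
  have U: "U \<noteq> 0" and V: "U + 1 \<noteq> 0" unfolding U_def using assms by (auto simp: field_simps)
  have xU: "x = 2*U+1" and VU: "(x+1)/2 = U+1" by (auto simp: U_def field_simps)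
  have nst: "s + (n-s) = n" using assms by simp
  have a1: "(x-1)/2 \<noteq> 0" "(x+1)/2 \<noteq> 0" using U V by (auto simp: U_def VU)
  show ?thesis
    unfolding Lval_def d1[OF a1] d2[OF a1] poly_mult poly_power poly_uu poly_vv U_def[symmetric] VU
    using term_id[OF U V, of "s" "n-s" be al] unfolding nst xU by simp
qed

lemma ode_pt:
  assumes "x \<noteq> 1" "x \<noteq> -1"
  shows "Lval n al be (jacobi_poly n al be) x = 0"
proof -
  define U where "U = (x-1)/2"
  define V where "V = (x+1)/2"
  have U: "U \<noteq> 0" and V: "V \<noteq> 0" using assms by (auto simp: U_def V_def)
  define T where "T s = cc n al be s * (real (n-s) * (real (n-s) + be)) * U^s * V^(n-s) / V" for s
  define A where "A s = cc n al be s * (real s * (real s + al)) * U^s * V^(n-s) / U" for s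
  have A0: "A 0 = 0" by (simp add: A_def)
  have Tn: "T n = 0" by (simp add: T_def)
  have AT: "A (Suc s) = T s" if "s < n" for s
  proof -
    define m where "m = n - Suc s"
    have m: "n - s = Suc m" using that by (simp add: m_def)
    have m2: "n - Suc s = m" using m by simp
    have "A (Suc s) = (cc n al be (Suc s) * (real (Suc s) * (real (Suc s) + al))) * U^s * V^m"
      unfolding A_def m2 using U by simp
    also have "\<dots> = cc n al be s * (real (n - s) * (real (n-s) + be)) * U^s * V^m"
      unfolding cc_rec[OF that] ..
    also have "\<dots> = T s" unfolding T_def m using V by simp
    finally show ?thesis .
  qed
  have "Lval n al be (jacobi_poly n al be) x = (\<Sum>s\<le>n. cc n al be s * Lval n al be (uu^s * vv^(n-s)) x)"
    unfolding jp_alt Lval_sum ..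
  also have "\<dots> = (\<Sum>s\<le>n. T s - A s)"
  proof (rule sum.cong[OF refl])
    fix s assume "s \<in> {..n}"
    then have s: "s \<le> n" by simp
    have "cc n al be s * Lval n al be (uu^s * vv^(n-s)) x = cc n al be s * (U^s * V^(n-s) *
     (- real s * (real s + al) / U + real (n-s) * (real (n-s) + be) / V))"
      unfolding Lval_term[OF assms s] U_def V_def ..
    also have "\<dots> = T s - A s" unfolding T_def A_def using U V by (simp add: field_simps)
    finally show "cc n al be s * Lval n al be (uu^s * vv^(n-s)) x = T s - A s" .
  qed
  also have "\<dots> = 0"
  proof (cases n)
    case 0 then show ?thesis using A0 Tn by simp
  next
    case (Suc k)
    have "(\<Sum>s\<le>n. A s) = A 0 + (\<Sum>s<n. A (Suc s))" unfolding Suc sum.atMost_Suc_shift lessThan_Suc_atMost ..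
    also have "\<dots> = (\<Sum>s<n. T s)" using A0 AT by simp
    also have "\<dots> = (\<Sum>s\<le>n. T s)" using Tn by (simp add: lessThan_Suc_atMost[symmetric] Suc)
    finally show ?thesis by (simp add: sum_subtractf)
  qed
  finally show ?thesis .
qed

definition Lpoly :: "nat \<Rightarrow> real \<Rightarrow> real \<Rightarrow> real poly \<Rightarrow> real poly" where
  "Lpoly n al be P = [:1,0,-1:] * pderiv (pderiv P) + [:be - al, -(al+be+2):] * pderiv P
     + smult (real n * (real n + al + be + 1)) P"

lemma poly_Lpoly: "poly (Lpoly n al be P) x = Lval n al be P x"
  unfolding Lpoly_def Lval_def by (simp add: algebra_simps power2_eq_square)

lemma ode_all: "Lval n al be (jacobi_poly n al be) x = 0"
proof -
  have "Lpoly n al be (jacobi_poly n al be) = 0"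
  proof (rule ccontr)
    assume "Lpoly n al be (jacobi_poly n al be) \<noteq> 0"
    then have "finite {x. poly (Lpoly n al be (jacobi_poly n al be)) x = 0}" by (rule poly_roots_finite)
    moreover have "UNIV - {1,-1} \<subseteq> {x. poly (Lpoly n al be (jacobi_poly n al be)) x = 0}"
      using ode_pt by (auto simp: poly_Lpoly)
    ultimately have "finite (UNIV - {1,-1::real})" by (rule rev_finite_subset)
    then show False using infinite_UNIV_char_0[where 'a=real] by simp
  qed
  then show ?thesis using poly_Lpoly[of n al be "jacobi_poly n al be" x] by simp
qed

lemma prod_dvd_roots:
  fixes p :: "real poly"
  assumes "finite S" "\<forall>s\<in>S. poly p s = 0"
  shows "(\<Prod>s\<in>S. [:-s,1:]) dvd p"
  using assms
proof (induct S rule: finite_induct)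
  case empty then show ?case by simp
next
  case (insert a S)
  then obtain r where r: "p = (\<Prod>s\<in>S. [:-s,1:]) * r" by (auto elim!: dvdE)
  have "poly p a = 0" using insert by simp
  moreover have "poly (\<Prod>s\<in>S. [:-s,1:]) a \<noteq> 0" using insert(1,2) by (auto simp: poly_prod)
  ultimately have "poly r a = 0" using r by simp
  then obtain r' where r': "r = [:-a,1:] * r'" by (auto simp: poly_eq_0_iff_dvd elim!: dvdE)
  have eq: "(\<Prod>s\<in>S. [:-s,1:]) * ([:-a,1:] * r') = ([:-a,1:] * (\<Prod>s\<in>S. [:-s,1:])) * r'"
    by (simp only: ac_simps)
  show ?case unfolding prod.insert[OF insert(1,2)] r r' eq by (rule dvd_triv_left)
qed

lemma degree_jp: "degree (jacobi_poly n al be) \<le> n"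
  unfolding jacobi_poly_def
proof (rule degree_sum_le)
  fix s assume "s \<in> {..n}"
  then have s: "s \<le> n" by simp
  have "degree ([:-1/2, 1/2:] ^ s * [:1/2, 1/2:] ^ (n - s) :: real poly) \<le> s + (n - s)"
  proof -
    have "degree ([:-1/2,1/2:]^s :: real poly) \<le> s" using degree_power_le[of "[:-1/2,1/2:]::real poly" s] by simp
    moreover have "degree ([:1/2,1/2:]^(n-s) :: real poly) \<le> n-s" using degree_power_le[of "[:1/2,1/2:]::real poly" "n-s"] by simp
    ultimately show ?thesis by (meson add_mono degree_mult_le order.trans)
  qed
  then have "degree ([:-1/2, 1/2:] ^ s * [:1/2, 1/2:] ^ (n - s) :: real poly) \<le> n" using s by simp
  then show "degree (smult (((real n + al) gchoose (n - s)) * ((real n + be) gchoose s))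
                 ([:-1/2, 1/2:] ^ s * [:1/2, 1/2:] ^ (n - s))) \<le> n"
    by (rule order.trans[OF degree_smult_le])
qed simp

lemma jp_factor:
  fixes z :: "nat \<Rightarrow> real" and P :: "real poly"
  assumes inj: "inj_on z {..<N}" and Z: "{x. poly P x = 0} = z ` {..<N}" and deg: "degree P \<le> N"
  obtains c where "c \<noteq> 0" "P = smult c (\<Prod>i<N. [:-z i, 1:])"
proof -
  have P0: "P \<noteq> 0"
  proof
    assume "P = 0"
    then have "UNIV = z ` {..<N}" using Z by auto
    then have "finite (UNIV :: real set)" by (metis finite_imageI finite_lessThan)
    then show False using infinite_UNIV_char_0[where 'a=real] by simp
  qed
  define Q where "Q = (\<Prod>i<N. [:-z i, 1:])"
  have Qs: "Q = (\<Prod>s\<in>z ` {..<N}. [:-s, 1:])" unfolding Q_def using prod.reindex[OF inj, of "\<lambda>s. [:-s,1:]"] by simp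
  have "Q dvd P" unfolding Qs by (rule prod_dvd_roots) (use Z in auto)
  then obtain r where r: "P = Q * r" by (auto elim!: dvdE)
  have Q0: "Q \<noteq> 0" unfolding Q_def by (simp add: prod_zero_iff)
  have dQ: "degree Q = N" unfolding Q_def by (subst degree_prod_eq_sum_degree) auto
  have r0: "r \<noteq> 0" using P0 r by auto
  have "degree P = N + degree r" using r Q0 r0 dQ by (simp add: degree_mult_eq)
  then have "degree r = 0" using deg by simp
  then obtain c where c: "r = [:c:]" by (rule degree_eq_zeroE)
  have "c \<noteq> 0" using r0 c by simp
  moreover have "P = smult c Q" using r c by simp
  ultimately show ?thesis using that Q_def by blast
qed

lemma root_derivs:
  fixes z :: "nat \<Rightarrow> real"
  assumes inj: "inj_on z {..<N}" and k: "k < N"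
  defines "R \<equiv> (\<Prod>i\<in>{..<N}-{k}. z k - z i)" and "S \<equiv> (\<Sum>j\<in>{..<N}-{k}. 1 / (z k - z j))"
  shows "R \<noteq> 0"
    "poly (pderiv (smult c (\<Prod>i<N. [:-z i, 1:]))) (z k) = c * R"
    "poly (pderiv (pderiv (smult c (\<Prod>i<N. [:-z i, 1:])))) (z k) = 2 * c * R * S"
proof -
  define A where "A = {..<N} - {k}"
  define Q where "Q = (\<Prod>i\<in>A. [:-z i, 1:])"
  have ne: "z k - z i \<noteq> 0" if "i \<in> A" for i using that inj k unfolding A_def by (auto dest: inj_onD)
  have fA: "finite A" by (simp add: A_def)
  show R0: "R \<noteq> 0" unfolding R_def A_def[symmetric] using ne fA by (simp add: prod_zero_iff)
  have split: "(\<Prod>i<N. [:-z i, 1:]) = [:-z k, 1:] * Q"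
    unfolding Q_def A_def using k by (simp add: prod.remove)
  have pQ: "poly Q (z k) = R" unfolding Q_def R_def A_def by (simp add: poly_prod)
  have pdQ: "poly (pderiv Q) (z k) = R * S"
  proof -
    have "poly (pderiv Q) (z k) = (\<Sum>a\<in>A. \<Prod>i\<in>A-{a}. z k - z i)"
      unfolding Q_def pderiv_prod by (simp add: poly_sum poly_prod pderiv_pCons)
    also have "\<dots> = (\<Sum>a\<in>A. R / (z k - z a))"
    proof (rule sum.cong[OF refl])
      fix a assume a: "a \<in> A"
      have "R = (z k - z a) * (\<Prod>i\<in>A-{a}. z k - z i)" unfolding R_def A_def[symmetric]
        using a by (simp add: prod.remove A_def)
      then show "(\<Prod>i\<in>A-{a}. z k - z i) = R / (z k - z a)" using ne[OF a] by simp
    qed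
    also have "\<dots> = R * S" unfolding S_def A_def[symmetric] by (simp add: sum_distrib_left)
    finally show ?thesis .
  qed
  define X where "X = [:-z k, 1:]"
  have dX: "pderiv X = 1" and pX: "poly X (z k) = 0" by (simp_all add: X_def pderiv_pCons)
  show "poly (pderiv (smult c (\<Prod>i<N. [:-z i, 1:]))) (z k) = c * R"
    unfolding split X_def[symmetric] pderiv_smult pderiv_mult dX using pQ pX by simp
  show "poly (pderiv (pderiv (smult c (\<Prod>i<N. [:-z i, 1:])))) (z k) = 2 * c * R * S"
    unfolding split X_def[symmetric] pderiv_smult pderiv_mult pderiv_add dX using pdQ pX by simp
qed

lemma crit_rel:
  fixes z :: "nat \<Rightarrow> real" and al be :: real
  assumes zmono: "\<And>i j. i < j \<Longrightarrow> j < N \<Longrightarrow> z i < z j"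
    and Z: "{x. poly (jacobi_poly N al be) x = 0} = z ` {..<N}"
    and k: "k < N"
  shows "(1 - (z k)^2) * (2 * (\<Sum>j\<in>{..<N}-{k}. 1/(z k - z j))) = (al+be+2) * z k + al - be"
proof -
  have inj: "inj_on z {..<N}"
  proof (rule inj_onI)
    fix i j assume "i \<in> {..<N}" "j \<in> {..<N}" "z i = z j"
    then show "i = j" using zmono[of i j] zmono[of j i] by (cases i j rule: linorder_cases) auto
  qed
  obtain c where c: "c \<noteq> 0" and P: "jacobi_poly N al be = smult c (\<Prod>i<N. [:-z i, 1:])"
    using jp_factor[OF inj Z degree_jp] by blast
  define R where "R = (\<Prod>i\<in>{..<N}-{k}. z k - z i)"
  define S where "S = (\<Sum>j\<in>{..<N}-{k}. 1/(z k - z j))"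
  have rd1: "R \<noteq> 0" using root_derivs(1)[OF inj k] unfolding R_def .
  have rd2: "poly (pderiv (smult c (\<Prod>i<N. [:-z i, 1:]))) (z k) = c * R"
    using root_derivs(2)[OF inj k, of c] unfolding R_def .
  have rd3: "poly (pderiv (pderiv (smult c (\<Prod>i<N. [:-z i, 1:])))) (z k) = 2 * c * R * S"
    using root_derivs(3)[OF inj k, of c] unfolding R_def S_def .
  have root: "poly (jacobi_poly N al be) (z k) = 0" using Z k by auto
  have "Lval N al be (jacobi_poly N al be) (z k) = 0" by (rule ode_all)
  then have "(1 - (z k)^2) * (2 * c * R * S) + (be - al - (al+be+2) * z k) * (c * R) = 0"
    unfolding Lval_def root using rd2 rd3 unfolding P by simp
  then have "(c * R) * ((1 - (z k)^2) * (2 * S) + (be - al - (al+be+2) * z k)) = 0"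
    by (simp add: algebra_simps)
  then have "(1 - (z k)^2) * (2 * S) + (be - al - (al+be+2) * z k) = 0" using c rd1 by simp
  then show ?thesis unfolding S_def by simp
qed

lemma crit:
  fixes z :: "nat \<Rightarrow> real" and al be :: real
  assumes al: "al > -1" and be: "be > -1"
    and zmono: "\<And>i j. i < j \<Longrightarrow> j < N \<Longrightarrow> z i < z j"
    and Z: "{x. poly (jacobi_poly N al be) x = 0} = z ` {..<N}"
    and k: "k < N"
  shows "-1 < z k" "z k < 1"
    "(\<Sum>j\<in>{..<N}-{k}. 1/(z k - z j)) = ((al+1)/2) / (1 - z k) - ((be+1)/2) / (1 + z k)"
proof -
  note rel = crit_rel[OF zmono Z]
  have top: "z (N-1) < 1"
  proof (rule ccontr)
    assume "\<not> z (N-1) < 1"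
    then have z1: "z (N-1) \<ge> 1" by simp
    have "(\<Sum>j\<in>{..<N}-{N-1}. 1/(z (N-1) - z j)) \<ge> 0"
    proof (rule sum_nonneg)
      fix j assume "j \<in> {..<N}-{N-1}"
      then have "j < N - 1" by auto
      then have "z j < z (N-1)" using zmono[of j "N-1"] k by auto
      then show "1/(z (N-1) - z j) \<ge> 0" by simp
    qed
    moreover have "1 - (z (N-1))^2 \<le> 0" using z1 by (simp add: power2_eq_square) (metis le_add_same_cancel1 mult_le_cancel_left1 not_one_le_zero order.trans linorder_not_le zero_le_one)
    ultimately have "(1 - (z (N-1))^2) * (2 * (\<Sum>j\<in>{..<N}-{N-1}. 1/(z (N-1) - z j))) \<le> 0"
      by (simp add: mult_nonpos_nonneg)
    moreover have "(al+be+2) * z (N-1) + al - be > 0"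
    proof -
      have "(al+be+2) * z (N-1) \<ge> (al+be+2) * 1" using z1 al be by (intro mult_left_mono) auto
      then show ?thesis using al by simp
    qed
    ultimately show False using rel[of "N-1"] k by simp
  qed
  have bot: "z 0 > -1"
  proof (rule ccontr)
    assume "\<not> z 0 > -1"
    then have z1: "z 0 \<le> -1" by simp
    have "(\<Sum>j\<in>{..<N}-{0}. 1/(z 0 - z j)) \<le> 0"
    proof (rule sum_nonpos)
      fix j assume "j \<in> {..<N}-{0}"
      then have "0 < j" "j < N" by auto
      then have "z 0 < z j" using zmono[of 0 j] by auto
      then show "1/(z 0 - z j) \<le> 0" by simp
    qed
    moreover have "1 - (z 0)^2 \<le> 0"
    proof -
      have "1 \<le> (z 0)^2" using z1 by (metis abs_le_square_iff abs_minus_cancel abs_of_nonneg le_minus_iff minus_le_iff power_one zero_le_one order.trans abs_ge_minus_self)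
      then show ?thesis by simp
    qed
    ultimately have "(1 - (z 0)^2) * (2 * (\<Sum>j\<in>{..<N}-{0}. 1/(z 0 - z j))) \<ge> 0"
      by (simp add: mult_nonpos_nonpos)
    moreover have "(al+be+2) * z 0 + al - be < 0"
    proof -
      have "(al+be+2) * z 0 \<le> (al+be+2) * (-1)" using z1 al be by (intro mult_left_mono) auto
      then show ?thesis using be by simp
    qed
    ultimately show False using rel[of 0] k by simp
  qed
  have "z 0 \<le> z k" using zmono[of 0 k] k by (cases k) auto
  then show lo: "-1 < z k" using bot by simp
  have "k = N-1 \<or> k < N-1" using k by auto
  then have "z k \<le> z (N-1)" using zmono[of k "N-1"] k by (auto intro: less_imp_le)
  then show hi: "z k < 1" using top by simp
  have d: "1 - z k \<noteq> 0" "1 + z k \<noteq> 0" using lo hi by auto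
  have e: "1 - (z k)^2 = (1 - z k) * (1 + z k)" by (simp add: power2_eq_square algebra_simps)
  define Sm where "Sm = (\<Sum>j\<in>{..<N}-{k}. 1/(z k - z j))"
  define w where "w = z k"
  have d2: "(1-w)*(1+w) \<noteq> 0" using d unfolding w_def by simp
  have h: "((1 - w) * (1 + w)) * Sm = ((al+be+2) * w + al - be) / 2"
    using rel[of k] k unfolding e Sm_def w_def by simp
  have "Sm = (((al+be+2) * w + al - be) / 2) / ((1 - w) * (1 + w))" using h d2 by (simp add: field_simps)
  also have "\<dots> = ((al+1)/2) / (1 - w) - ((be+1)/2) / (1 + w)"
  proof -
    have d3: "1 - w \<noteq> 0" "1 + w \<noteq> 0" using d unfolding w_def by auto
    have "((al+1)/2) / (1 - w) - ((be+1)/2) / (1 + w) = (((al+1)/2) * (1 + w) - ((be+1)/2) * (1 - w)) / ((1 - w) * (1 + w))"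
      by (rule diff_frac_eq[OF d3])
    also have "((al+1)/2) * (1 + w) - ((be+1)/2) * (1 - w) = ((al+be+2) * w + al - be) / 2" by (simp add: field_simps)
    finally show ?thesis by simp
  qed
  finally show "(\<Sum>j\<in>{..<N}-{k}. 1/(z k - z j)) = ((al+1)/2) / (1 - z k) - ((be+1)/2) / (1 + z k)"
    unfolding Sm_def w_def .
qed

lemma ln_gap:
  fixes u :: real assumes u: "0 < u"
  shows "ln u \<le> (u - 1) - (u - 1)^2 / (2 * (u + 1))"
proof -
  define w where "w = sqrt u"
  have w: "0 < w" "w^2 = u" using u by (auto simp: w_def)
  have "ln u = 2 * ln w" using u by (simp add: w_def ln_sqrt)
  also have "\<dots> \<le> 2 * (w - 1)" using ln_le_minus_one[OF w(1)] by simp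
  also have "\<dots> \<le> (u - 1) - (u - 1)^2 / (2 * (u + 1))"
  proof -
    have pos: "2 * (w^2 + 1) > 0" using zero_le_power2[of w] by (smt (verit))
    have "(w^2 - 1)^2 = (w-1)^2 * (w+1)^2" by (simp add: power2_eq_square algebra_simps)
    also have "\<dots> \<le> (w-1)^2 * (2 * (w^2 + 1))"
    proof (intro mult_left_mono)
      have "(w+1)^2 = w^2 + 2*w + 1" "(w-1)^2 = w^2 - 2*w + 1" by (simp_all add: power2_eq_square algebra_simps)
      then show "(w+1)^2 \<le> 2 * (w^2 + 1)" using zero_le_power2[of "w-1"] by (smt (verit))
    qed simp
    finally have "(w^2 - 1)^2 / (2 * (w^2 + 1)) \<le> (w-1)^2" using pos by (simp add: divide_le_eq)
    then show ?thesis unfolding w(2)[symmetric] by (simp add: power2_eq_square algebra_simps)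
  qed
  finally show ?thesis .
qed

lemma ln_gap2:
  fixes x z :: real
  assumes "-1 < x" "x < 1" "-1 < z" "z < 1"
  shows "ln ((1 - x) / (1 - z)) \<le> ((1 - x) / (1 - z) - 1) - (x - z)^2 / 16"
proof -
  define u where "u = (1 - x) / (1 - z)"
  have z1: "1 - z > 0" using assms by simp
  have u: "u > 0" using assms by (simp add: u_def)
  have um: "u - 1 = (z - x) / (1 - z)" using z1 by (simp add: u_def field_simps)
  have up: "u + 1 = (2 - x - z) / (1 - z)" using z1 by (simp add: u_def field_simps)
  have "(u - 1)^2 / (2 * (u + 1)) = (x - z)^2 / (2 * (1 - z) * (2 - x - z))"
  proof -
    have gen: "(A / c)^2 / (2 * (e / c)) = A^2 / (2 * c * e)" if "c > 0" "e > 0" for A c e :: real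
      using that by (simp add: field_simps power2_eq_square)
    have "(z - x)^2 = (x - z)^2" by (simp add: power2_commute)
    then show ?thesis unfolding um up using gen[OF z1, of "2 - x - z" "z - x"] assms by simp
  qed
  also have "\<dots> \<ge> (x - z)^2 / 16"
  proof (rule divide_left_mono)
    have "2 * (1 - z) * (2 - x - z) \<le> 2 * 2 * 4"
      using assms by (intro mult_mono) auto
    then show "2 * (1 - z) * (2 - x - z) \<le> 16" by simp
    show "0 < 16 * (2 * (1 - z) * (2 - x - z))" using assms by simp
  qed simp
  finally have "(x - z)^2 / 16 \<le> (u - 1)^2 / (2 * (u + 1))" .
  then show ?thesis using ln_gap[OF u] unfolding u_def by linarith
qed

lemma pair_sum:
  fixes d z :: "nat \<Rightarrow> real"
  shows "(\<Sum>j<N. \<Sum>i<j. (d j - d i) / (z j - z i)) = (\<Sum>k<N. d k * (\<Sum>j\<in>{..<N}-{k}. 1 / (z k - z j)))"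
proof (induct N)
  case 0 then show ?case by simp
next
  case (Suc N)
  have split: "{..<Suc N} - {k} = insert N ({..<N} - {k})" if "k < N" for k using that by auto
  have "(\<Sum>k<Suc N. d k * (\<Sum>j\<in>{..<Suc N}-{k}. 1 / (z k - z j)))
      = (\<Sum>k<N. d k * (\<Sum>j\<in>{..<Suc N}-{k}. 1 / (z k - z j))) + d N * (\<Sum>j<N. 1 / (z N - z j))"
    by (simp add: lessThan_Suc)
  also have "(\<Sum>k<N. d k * (\<Sum>j\<in>{..<Suc N}-{k}. 1 / (z k - z j)))
      = (\<Sum>k<N. d k * (\<Sum>j\<in>{..<N}-{k}. 1 / (z k - z j)) + d k / (z k - z N))"
    by (rule sum.cong[OF refl]) (simp add: split algebra_simps)
  finally have "(\<Sum>k<Suc N. d k * (\<Sum>j\<in>{..<Suc N}-{k}. 1 / (z k - z j)))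
     = (\<Sum>k<N. d k * (\<Sum>j\<in>{..<N}-{k}. 1 / (z k - z j))) + (\<Sum>i<N. d i / (z i - z N) + d N / (z N - z i))"
    by (simp add: sum.distrib sum_distrib_left)
  moreover have "(\<Sum>i<N. d i / (z i - z N) + d N / (z N - z i)) = (\<Sum>i<N. (d N - d i) / (z N - z i))"
  proof (rule sum.cong[OF refl])
    fix i
    have e: "z i - z N = - (z N - z i)" by simp
    have "d i / (z i - z N) = - (d i / (z N - z i))" unfolding e by (rule divide_minus_right)
    then show "d i / (z i - z N) + d N / (z N - z i) = (d N - d i) / (z N - z i)" by (simp add: diff_divide_distrib)
  qed
  ultimately show ?case using Suc by simp
qed

definition LL :: "nat \<Rightarrow> real \<Rightarrow> real \<Rightarrow> (nat \<Rightarrow> real) \<Rightarrow> real" where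
  "LL N p q x = (\<Sum>j<N. \<Sum>i<j. ln (x j - x i)) + (\<Sum>i<N. p * ln (1 - x i) + q * ln (1 + x i))"

definition intp :: "nat \<Rightarrow> (nat \<Rightarrow> real) \<Rightarrow> bool" where
  "intp N x \<longleftrightarrow> (\<forall>i<N. -1 < x i \<and> x i < 1) \<and> (\<forall>j<N. \<forall>i<j. x i < x j)"

lemma station:
  fixes x z :: "nat \<Rightarrow> real"
  assumes z: "intp N z"
    and crit: "\<And>k. k < N \<Longrightarrow> (\<Sum>j\<in>{..<N}-{k}. 1/(z k - z j)) = p / (1 - z k) - q / (1 + z k)"
  shows "(\<Sum>j<N. \<Sum>i<j. ((x j - x i) / (z j - z i) - 1))
    + (\<Sum>i<N. p * ((1 - x i) / (1 - z i) - 1) + q * ((1 + x i) / (1 + z i) - 1)) = 0"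
proof -
  define d where "d i = x i - z i" for i
  have "(\<Sum>j<N. \<Sum>i<j. ((x j - x i) / (z j - z i) - 1)) = (\<Sum>j<N. \<Sum>i<j. (d j - d i) / (z j - z i))"
  proof (intro sum.cong refl)
    fix j i assume "j \<in> {..<N}" "i \<in> {..<j}"
    then have "z i < z j" using z unfolding intp_def by auto
    then show "(x j - x i) / (z j - z i) - 1 = (d j - d i) / (z j - z i)" by (simp add: d_def field_simps)
  qed
  also have "\<dots> = (\<Sum>k<N. d k * (\<Sum>j\<in>{..<N}-{k}. 1 / (z k - z j)))" by (rule pair_sum)
  also have "\<dots> = - (\<Sum>i<N. p * ((1 - x i) / (1 - z i) - 1) + q * ((1 + x i) / (1 + z i) - 1))"
    unfolding sum_negf[symmetric]
  proof (intro sum.cong refl)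
    fix k assume k: "k \<in> {..<N}"
    then have nz: "1 - z k \<noteq> 0" "1 + z k \<noteq> 0" using z unfolding intp_def by auto
    have e1: "(1 - x k)/(1 - z k) - 1 = -(x k - z k)/(1 - z k)" using nz by (simp add: field_simps)
    have e2: "(1 + x k)/(1 + z k) - 1 = (x k - z k)/(1 + z k)" using nz by (simp add: field_simps)
    show "d k * (\<Sum>j\<in>{..<N}-{k}. 1 / (z k - z j)) = - (p * ((1 - x k) / (1 - z k) - 1) + q * ((1 + x k) / (1 + z k) - 1))"
      unfolding crit[of k, OF k[simplified]] d_def e1 e2 by (simp add: algebra_simps) (simp add: minus_divide_left)
  qed
  finally show ?thesis by simp
qed

lemma gap:
  fixes x z :: "nat \<Rightarrow> real"
  assumes p: "p > 0" and q: "q \<ge> 0" and z: "intp N z" and x: "intp N x"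
    and crit: "\<And>k. k < N \<Longrightarrow> (\<Sum>j\<in>{..<N}-{k}. 1/(z k - z j)) = p / (1 - z k) - q / (1 + z k)"
  shows "LL N p q x \<le> LL N p q z - p / 16 * (\<Sum>i<N. (x i - z i)^2)"
proof -
  have "LL N p q x - LL N p q z = (\<Sum>j<N. \<Sum>i<j. ln ((x j - x i) / (z j - z i)))
      + (\<Sum>i<N. p * ln ((1 - x i) / (1 - z i)) + q * ln ((1 + x i) / (1 + z i)))"
  proof -
    have a: "(\<Sum>j<N. \<Sum>i<j. ln (x j - x i)) - (\<Sum>j<N. \<Sum>i<j. ln (z j - z i)) = (\<Sum>j<N. \<Sum>i<j. ln ((x j - x i) / (z j - z i)))"
      unfolding sum_subtractf[symmetric]
    proof (intro sum.cong refl)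
      fix j i assume "j \<in> {..<N}" "i \<in> {..<j}"
      then have "z i < z j" "x i < x j" using z x unfolding intp_def by auto
      then show "ln (x j - x i) - ln (z j - z i) = ln ((x j - x i) / (z j - z i))" by (simp add: ln_div)
    qed
    have b: "(\<Sum>i<N. p * ln (1 - x i) + q * ln (1 + x i)) - (\<Sum>i<N. p * ln (1 - z i) + q * ln (1 + z i))
        = (\<Sum>i<N. p * ln ((1 - x i) / (1 - z i)) + q * ln ((1 + x i) / (1 + z i)))"
      unfolding sum_subtractf[symmetric]
    proof (intro sum.cong refl)
      fix i assume "i \<in> {..<N}"
      then have "1 - z i > 0" "1 + z i > 0" "1 - x i > 0" "1 + x i > 0" using z x unfolding intp_def by auto
      then show "p * ln (1 - x i) + q * ln (1 + x i) - (p * ln (1 - z i) + q * ln (1 + z i)) =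
          p * ln ((1 - x i) / (1 - z i)) + q * ln ((1 + x i) / (1 + z i))" by (simp add: ln_div algebra_simps)
    qed
    show ?thesis unfolding LL_def using a b by simp
  qed
  also have "\<dots> \<le> (\<Sum>j<N. \<Sum>i<j. ((x j - x i) / (z j - z i) - 1))
      + (\<Sum>i<N. p * (((1 - x i) / (1 - z i) - 1) - (x i - z i)^2 / 16) + q * ((1 + x i) / (1 + z i) - 1))"
  proof (rule add_mono; intro sum_mono)
    fix j i assume "j \<in> {..<N}" "i \<in> {..<j}"
    then have "z i < z j" "x i < x j" using z x unfolding intp_def by auto
    then show "ln ((x j - x i) / (z j - z i)) \<le> (x j - x i) / (z j - z i) - 1" by (intro ln_le_minus_one) simp
  next
    fix i assume "i \<in> {..<N}"
    then have h: "-1 < z i" "z i < 1" "-1 < x i" "x i < 1" using z x unfolding intp_def by auto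
    have "p * ln ((1 - x i) / (1 - z i)) \<le> p * (((1 - x i) / (1 - z i) - 1) - (x i - z i)^2 / 16)"
      using ln_gap2[OF h(3,4,1,2)] p by (intro mult_left_mono) auto
    moreover have "q * ln ((1 + x i) / (1 + z i)) \<le> q * ((1 + x i) / (1 + z i) - 1)"
      using h q by (intro mult_left_mono ln_le_minus_one) auto
    ultimately show "p * ln ((1 - x i) / (1 - z i)) + q * ln ((1 + x i) / (1 + z i))
        \<le> p * (((1 - x i) / (1 - z i) - 1) - (x i - z i)^2 / 16) + q * ((1 + x i) / (1 + z i) - 1)" by simp
  qed
  also have "\<dots> = ((\<Sum>j<N. \<Sum>i<j. ((x j - x i) / (z j - z i) - 1))
    + (\<Sum>i<N. p * ((1 - x i) / (1 - z i) - 1) + q * ((1 + x i) / (1 + z i) - 1))) - p / 16 * (\<Sum>i<N. (x i - z i)^2)"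
  proof -
    have "(\<Sum>i<N. p * (((1 - x i) / (1 - z i) - 1) - (x i - z i)^2 / 16) + q * ((1 + x i) / (1 + z i) - 1))
      = (\<Sum>i<N. p * ((1 - x i) / (1 - z i) - 1) + q * ((1 + x i) / (1 + z i) - 1)) - p / 16 * (\<Sum>i<N. (x i - z i)^2)"
      unfolding sum_distrib_left sum_subtractf[symmetric] by (rule sum.cong[OF refl]) (simp add: algebra_simps)
    then show ?thesis by simp
  qed
  also have "\<dots> = - p / 16 * (\<Sum>i<N. (x i - z i)^2)" using station[OF z crit, of x] by linarith
  finally show ?thesis by simp
qed

definition GG :: "nat \<Rightarrow> (nat \<Rightarrow> real) \<Rightarrow> real" where
  "GG N x = (\<Sum>i<N. - (1/2) * (ln (1 - x i) + ln (1 + x i)))"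

lemma intp_alcove: "intp N x \<Longrightarrow> x \<in> alcove N"
  unfolding intp_def alcove_def by (auto simp: le_less)

lemma dens_int:
  assumes x: "intp N x"
  shows "jacobi_dens N a b k x = exp (k * LL N ((a+b)/2) (b/2) x + GG N x)"
proof -
  have pos1: "x j - x i > 0" if "j < N" "i < j" for i j using x that unfolding intp_def by auto
  have pos2: "1 - x i > 0" "1 + x i > 0" if "i < N" for i using x that unfolding intp_def by auto
  have A: "(\<Prod>j<N. \<Prod>i<j. (x j - x i) powr k) = exp (k * (\<Sum>j<N. \<Sum>i<j. ln (x j - x i)))"
    unfolding sum_distrib_left exp_sum[OF finite_lessThan]
  proof (intro prod.cong refl)
    fix j i assume "j \<in> {..<N}" "i \<in> {..<j}"
    then have "x j - x i > 0" using pos1 by simp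
    then show "(x j - x i) powr k = exp (k * ln (x j - x i))" by (simp add: powr_def)
  qed
  have B: "(\<Prod>i<N. (1 - x i) powr (k * (a + b) / 2 - 1/2) * (1 + x i) powr (k * b / 2 - 1/2))
     = exp (\<Sum>i<N. (k * (a + b) / 2 - 1/2) * ln (1 - x i) + (k * b / 2 - 1/2) * ln (1 + x i))"
    unfolding exp_sum[OF finite_lessThan]
  proof (intro prod.cong refl)
    fix i assume "i \<in> {..<N}"
    then have "i < N" by simp
    note pp = pos2[OF this]
    show "(1 - x i) powr (k * (a + b) / 2 - 1/2) * (1 + x i) powr (k * b / 2 - 1/2)
       = exp ((k * (a + b) / 2 - 1/2) * ln (1 - x i) + (k * b / 2 - 1/2) * ln (1 + x i))"
      using pp by (simp add: powr_def exp_add)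
  qed
  have C: "(\<Sum>i<N. (k * (a + b) / 2 - 1/2) * ln (1 - x i) + (k * b / 2 - 1/2) * ln (1 + x i))
     = k * (\<Sum>i<N. (a+b)/2 * ln (1 - x i) + b/2 * ln (1 + x i)) + GG N x"
    unfolding GG_def sum_distrib_left sum.distrib[symmetric] by (rule sum.cong[OF refl]) (simp add: algebra_simps)
  show ?thesis
    unfolding jacobi_dens_def indicator_simps(1)[OF intp_alcove[OF x]] A B C LL_def
    by (simp add: exp_add[symmetric] algebra_simps)
qed

lemma dens_nonneg: "jacobi_dens N a b k x \<ge> 0"
  unfolding jacobi_dens_def by (intro mult_nonneg_nonneg prod_nonneg) auto

lemma dens_bd:
  assumes x: "x \<in> alcove N" and nx: "\<not> intp N x" and k: "k > 0"
  shows "jacobi_dens N a b k x = 0"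
proof -
  from x have r: "\<forall>i<N. -1 \<le> x i \<and> x i \<le> 1" and o: "\<forall>i j. i \<le> j \<and> j < N \<longrightarrow> x i \<le> x j"
    unfolding alcove_def by auto
  from nx r o consider (e) i where "i < N" "x i = -1 \<or> x i = 1" | (p) i j where "j < N" "i < j" "x i = x j"
    unfolding intp_def by (metis less_imp_le less_le)
  then show ?thesis
  proof cases
    case e
    then have "x i = -1 \<or> x i = 1" "i \<in> {..<N}" by auto
    then have "(\<Prod>i<N. (1 - x i) powr (k * (a + b) / 2 - 1/2) * (1 + x i) powr (k * b / 2 - 1/2)) = 0"
      by (subst prod_zero_iff) (auto intro!: bexI[of _ i])
    then show ?thesis unfolding jacobi_dens_def by simp
  next
    case p
    then have "(\<Prod>i<j. (x j - x i) powr k) = 0" by (subst prod_zero_iff) (auto intro!: bexI[of _ i])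
    then have "(\<Prod>j<N. \<Prod>i<j. (x j - x i) powr k) = 0" using p by (subst prod_zero_iff) auto
    then show ?thesis unfolding jacobi_dens_def by simp
  qed
qed

lemma box_exists:
  fixes z :: "nat \<Rightarrow> real"
  assumes z: "intp N z" and p: "p \<ge> 0" and q: "q \<ge> 0" and D: "D > 0"
  obtains \<eta> where "\<eta> > 0" "\<And>x. (\<forall>i<N. \<bar>x i - z i\<bar> \<le> \<eta>) \<Longrightarrow> intp N x \<and> LL N p q x \<ge> LL N p q z - D"
proof -
  have zp1: "z j - z i > 0" if "j < N" "i < j" for i j using z that unfolding intp_def by auto
  have zp2: "1 - z i > 0" "1 + z i > 0" if "i < N" for i using z that unfolding intp_def by auto
  define Lf where "Lf e = (\<Sum>j<N. \<Sum>i<j. ln (z j - z i - 2*e)) + (\<Sum>i<N. p * ln (1 - z i - e) + q * ln (1 + z i - e))" for e :: real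
  have L0: "Lf 0 = LL N p q z" unfolding Lf_def LL_def by simp
  have "(Lf \<longlongrightarrow> Lf 0) (at 0)" unfolding Lf_def
  proof (intro tendsto_intros)
    fix j i assume "j \<in> {..<N}" "i \<in> {..<j}"
    then show "z j - z i - 2 * 0 \<noteq> 0" using zp1[of j i] by simp
  next
    fix i assume "i \<in> {..<N}"
    then show "1 - z i - 0 \<noteq> 0" "1 + z i - 0 \<noteq> 0" using zp2[of i] by auto
  qed
  then have ev1: "eventually (\<lambda>e. Lf e > LL N p q z - D) (at 0)"
    using D L0 by (intro order_tendstoD(1)) auto
  have ev2: "eventually (\<lambda>e. \<forall>j\<in>{..<N}. \<forall>i\<in>{..<j}. z j - z i - 2*e > 0) (at 0)"
  proof (intro eventually_ball_finite ballI finite_lessThan)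
    fix j i assume ji: "j \<in> {..<N}" "i \<in> {..<j}"
    have "((\<lambda>e. z j - z i - 2*e) \<longlongrightarrow> z j - z i - 2*0) (at 0)" by (intro tendsto_intros)
    moreover have "z j - z i - 2*0 > 0" using zp1[of j i] ji by simp
    ultimately
    show "eventually (\<lambda>e. z j - z i - 2*e > 0) (at 0)" by (rule order_tendstoD(1))
  qed
  have ev3: "eventually (\<lambda>e. \<forall>i\<in>{..<N}. 1 - z i - e > 0 \<and> 1 + z i - e > 0) (at 0)"
  proof (intro eventually_ball_finite ballI finite_lessThan eventually_conj)
    fix i assume "i \<in> {..<N}"
    then have a: "1 - z i - 0 > 0" "1 + z i - 0 > 0" using zp2[of i] by auto
    have b: "((\<lambda>e. 1 - z i - e) \<longlongrightarrow> 1 - z i - 0) (at 0)"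
      "((\<lambda>e. 1 + z i - e) \<longlongrightarrow> 1 + z i - 0) (at 0)" by (intro tendsto_intros)+
    show "eventually (\<lambda>e. 1 - z i - e > 0) (at 0)" by (rule order_tendstoD(1)[OF b(1) a(1)])
    show "eventually (\<lambda>e. 1 + z i - e > 0) (at 0)" by (rule order_tendstoD(1)[OF b(2) a(2)])
  qed
  from eventually_conj[OF ev1 eventually_conj[OF ev2 ev3]]
  obtain d where d: "d > 0" and dP: "\<And>e. e \<noteq> 0 \<Longrightarrow> dist e 0 < d \<Longrightarrow>
      Lf e > LL N p q z - D \<and> (\<forall>j\<in>{..<N}. \<forall>i\<in>{..<j}. z j - z i - 2*e > 0) \<and> (\<forall>i\<in>{..<N}. 1 - z i - e > 0 \<and> 1 + z i - e > 0)"
    unfolding eventually_at by auto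
  define e where "e = d / 2"
  have e: "e > 0" "e \<noteq> 0" "dist e 0 < d" using d by (auto simp: e_def)
  note eP = dP[OF e(2,3)]
  show ?thesis
  proof (rule that[OF e(1)])
    fix x assume x: "\<forall>i<N. \<bar>x i - z i\<bar> \<le> e"
    have xd: "x j - x i \<ge> z j - z i - 2*e" if "j < N" "i < j" for i j
      using x that by (smt (verit) less_trans)
    have xp1: "x j - x i > 0" if "j < N" "i < j" for i j
    proof -
      have "z j - z i - 2*e > 0" using eP that by blast
      then show ?thesis using xd[OF that] by linarith
    qed
    have xu: "1 - x i \<ge> 1 - z i - e" "1 + x i \<ge> 1 + z i - e" if "i < N" for i using x that by force+
    have xp2: "1 - x i > 0" "1 + x i > 0" if "i < N" for i
    proof -
      have "1 - z i - e > 0" "1 + z i - e > 0" using eP that by blast+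
      then show "1 - x i > 0" "1 + x i > 0" using xu[OF that] by linarith+
    qed
    have ix: "intp N x" unfolding intp_def using xp1 xp2 by force
    have "Lf e \<le> LL N p q x" unfolding Lf_def LL_def
    proof (rule add_mono; intro sum_mono)
      fix j i assume ji: "j \<in> {..<N}" "i \<in> {..<j}"
      then have "z j - z i - 2*e > 0" using eP by blast
      then show "ln (z j - z i - 2*e) \<le> ln (x j - x i)" using xd[of j i] ji by simp
    next
      fix i assume i: "i \<in> {..<N}"
      then have "1 - z i - e > 0" "1 + z i - e > 0" using eP by blast+
      then have "ln (1 - z i - e) \<le> ln (1 - x i)" "ln (1 + z i - e) \<le> ln (1 + x i)" using xu[of i] i by simp_all
      then show "p * ln (1 - z i - e) + q * ln (1 + z i - e) \<le> p * ln (1 - x i) + q * ln (1 + x i)"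
        using p q by (intro add_mono mult_left_mono) auto
    qed
    then show "intp N x \<and> LL N p q x \<ge> LL N p q z - D" using ix eP by simp
  qed
qed

lemma alcove_eq: "alcove N = {x. (\<forall>i\<in>{..<N}. -1 \<le> x i \<and> x i \<le> 1) \<and> (\<forall>j\<in>{..<N}. \<forall>i\<in>{..<N}. i \<le> j \<longrightarrow> x i \<le> x j)}"
  unfolding alcove_def by (intro Collect_cong conj_cong refl) (use le_less_trans in blast)+

lemma alcove_sets: "alcove N \<inter> space (lborelN N) \<in> sets (lborelN N)"
proof -
  have "alcove N \<inter> space (lborelN N) = {x \<in> space (lborelN N). (\<forall>i\<in>{..<N}. -1 \<le> x i \<and> x i \<le> 1) \<and> (\<forall>j\<in>{..<N}. \<forall>i\<in>{..<N}. i \<le> j \<longrightarrow> x i \<le> x j)}"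
    unfolding alcove_eq by blast
  also have "\<dots> \<in> sets (lborelN N)"
  proof (rule predE, intro pred_intros_logic(3) pred_intros_finite finite_lessThan pred_intros_imp' pred_intros_logic(3))
    fix i assume i: "i \<in> {..<N}"
    show "Measurable.pred (lborelN N) (\<lambda>x. - 1 \<le> x i)" using i by measurable
    show "Measurable.pred (lborelN N) (\<lambda>x. x i \<le> 1)" using i by measurable
  next
    fix i j assume i: "i \<in> {..<N}" and j: "j \<in> {..<N}"
    have mi: "(\<lambda>x. x i) \<in> borel_measurable (lborelN N)" using i by measurable
    have mj: "(\<lambda>x. x j) \<in> borel_measurable (lborelN N)" using j by measurable
    show "Measurable.pred (lborelN N) (\<lambda>x. x j \<le> x i)" unfolding pred_def by (rule borel_measurable_le[OF mj mi])
  qed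
  finally show ?thesis .
qed

lemma dens_meas: "jacobi_dens N a b k \<in> borel_measurable (lborelN N)"
  unfolding jacobi_dens_def
  apply (intro borel_measurable_times borel_measurable_prod)
  using alcove_sets borel_measurable_indicator_iff apply blast
  apply measurable
  done

declare dens_meas[measurable]

lemma dens_factor:
  assumes "intp N x"
  shows "jacobi_dens N a b k x = exp ((k - 1) * LL N ((a+b)/2) (b/2) x) * jacobi_dens N a b 1 x"
proof -
  have "k * LL N ((a+b)/2) (b/2) x + GG N x = (k - 1) * LL N ((a+b)/2) (b/2) x + (1 * LL N ((a+b)/2) (b/2) x + GG N x)"
    by (simp add: algebra_simps)
  then show ?thesis unfolding dens_int[OF assms] by (simp only: exp_add)
qed

lemma dens_ub:
  assumes k: "k \<ge> 1" and c: "intp N x \<Longrightarrow> LL N ((a+b)/2) (b/2) x \<le> c"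
  shows "jacobi_dens N a b k x \<le> exp ((k - 1) * c) * jacobi_dens N a b 1 x"
proof (cases "intp N x")
  case True
  have "(k - 1) * LL N ((a+b)/2) (b/2) x \<le> (k - 1) * c"
    using c[OF True] k by (intro mult_left_mono) auto
  then have "exp ((k - 1) * LL N ((a+b)/2) (b/2) x) \<le> exp ((k - 1) * c)" by simp
  then show ?thesis unfolding dens_factor[OF True, where k=k] using dens_nonneg[of N a b 1 x] by (rule mult_right_mono)
next
  case False
  have "jacobi_dens N a b k x = 0"
  proof (cases "x \<in> alcove N")
    case True show ?thesis using k by (intro dens_bd[OF True False]) simp
  next
    case False then have "indicator (alcove N) x = (0::real)" by simp
    then show ?thesis unfolding jacobi_dens_def by (simp only: mult_zero_left)
  qed
  moreover have "0 \<le> exp ((k - 1) * c) * jacobi_dens N a b 1 x" using dens_nonneg[of N a b 1 x] by simp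
  ultimately show ?thesis by simp
qed

lemma dens_lb:
  assumes k: "k \<ge> 1" and x: "intp N x" and c: "LL N ((a+b)/2) (b/2) x \<ge> c"
  shows "jacobi_dens N a b k x \<ge> exp ((k - 1) * c) * jacobi_dens N a b 1 x"
proof -
  have "(k - 1) * c \<le> (k - 1) * LL N ((a+b)/2) (b/2) x"
    using c k by (intro mult_left_mono) auto
  then have "exp ((k - 1) * c) \<le> exp ((k - 1) * LL N ((a+b)/2) (b/2) x)" by simp
  then show ?thesis unfolding dens_factor[OF x, where k=k] using dens_nonneg[of N a b 1 x] by (rule mult_right_mono)
qed

lemma emeasure_ens:
  assumes "A \<in> sets (lborelN N)"
  shows "emeasure (jacobi_ensemble N a b k) A =
    (\<integral>\<^sup>+ x. ennreal (jacobi_dens N a b k x / jacobi_norm N a b k) * indicator A x \<partial>lborelN N)"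
proof -
  have se: "sets (lborelN N) = sets (PiM {..<N} (\<lambda>_. borel))" by (intro sets_PiM_cong) simp_all
  have m: "(\<lambda>x. ennreal (jacobi_dens N a b k x / jacobi_norm N a b k)) \<in> borel_measurable (lborelN N)"
    by measurable
  show ?thesis unfolding jacobi_ensemble_def by (rule emeasure_density[OF m assms])
qed

lemma norm_facts:
  assumes P: "prob_space (jacobi_ensemble N a b k)"
  shows "jacobi_norm N a b k > 0"
    "(\<integral>\<^sup>+ x. ennreal (jacobi_dens N a b k x) \<partial>lborelN N) = ennreal (jacobi_norm N a b k)"
proof -
  define n where "n = jacobi_norm N a b k"
  define I where "I = (\<integral>\<^sup>+ x. ennreal (jacobi_dens N a b k x) \<partial>lborelN N)"
  have sp: "space (jacobi_ensemble N a b k) = space (lborelN N)" unfolding jacobi_ensemble_def by simp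
  have "1 = emeasure (jacobi_ensemble N a b k) (space (lborelN N))"
    using prob_space.emeasure_space_1[OF P] sp by simp
  also have "\<dots> = (\<integral>\<^sup>+ x. ennreal (jacobi_dens N a b k x / n) * indicator (space (lborelN N)) x \<partial>lborelN N)"
    unfolding n_def by (rule emeasure_ens) simp
  also have "\<dots> = (\<integral>\<^sup>+ x. ennreal (jacobi_dens N a b k x / n) \<partial>lborelN N)"
    by (rule nn_integral_cong) simp
  finally have one: "(\<integral>\<^sup>+ x. ennreal (jacobi_dens N a b k x / n) \<partial>lborelN N) = 1" by simp
  have "n \<noteq> 0"
  proof
    assume n0: "n = 0"
    have "(\<integral>\<^sup>+ x. ennreal (jacobi_dens N a b k x / n) \<partial>lborelN N) = 0" unfolding n0 by simp
    then show False using one by simp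
  qed
  moreover have "n \<ge> 0" unfolding n_def jacobi_norm_def by simp
  ultimately have npos: "n > 0" by simp
  then show "jacobi_norm N a b k > 0" unfolding n_def .
  have nI: "n = enn2real I" unfolding n_def jacobi_norm_def I_def ..
  have "I \<noteq> top"
  proof
    assume "I = top"
    then have "n = 0" unfolding nI by simp
    then show False using npos by simp
  qed
  then have "ennreal (enn2real I) = I" by (simp add: less_top)
  then show "(\<integral>\<^sup>+ x. ennreal (jacobi_dens N a b k x) \<partial>lborelN N) = ennreal (jacobi_norm N a b k)"
    unfolding jacobi_norm_def I_def by simp
qed

lemma box_pos:
  fixes z :: "nat \<Rightarrow> real"
  assumes "e > 0"
  shows "emeasure (lborelN N) (PiE {..<N} (\<lambda>i. {z i - e .. z i + e})) > 0"
proof -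
  interpret product_sigma_finite "\<lambda>_::nat. lborel" by standard
  have "emeasure (lborelN N) (PiE {..<N} (\<lambda>i. {z i - e .. z i + e})) = (\<Prod>i<N. emeasure lborel {z i - e .. z i + e})"
    by (rule emeasure_PiM) auto
  also have "\<dots> = (\<Prod>i<N. ennreal (2 * e))" using assms by simp
  also have "\<dots> = ennreal ((2 * e) ^ N)" using assms by (simp add: ennreal_power)
  also have "\<dots> > 0" using assms by simp
  finally show ?thesis .
qed

lemma exp_tend:
  fixes D C :: real assumes D: "D > 0"
  shows "((\<lambda>k. exp (- ((k - 1) * D)) * C) \<longlongrightarrow> 0) at_top"
proof -
  have "filterlim (\<lambda>k::real. (k - 1) * D) at_top at_top"
    unfolding filterlim_at_top
  proof
    fix Z :: real
    show "eventually (\<lambda>k. Z \<le> (k - 1) * D) at_top"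
      using eventually_ge_at_top[of "Z / D + 1"]
    proof (rule eventually_mono)
      fix k :: real assume "Z / D + 1 \<le> k"
      then have "Z / D \<le> k - 1" by simp
      then show "Z \<le> (k - 1) * D" using D by (simp add: divide_le_eq)
    qed
  qed
  then have "filterlim (\<lambda>k::real. - ((k - 1) * D)) at_bot at_top"
    by (subst filterlim_uminus_at_bot) (simp only: minus_minus)
  then have "((\<lambda>k. exp (- ((k - 1) * D))) \<longlongrightarrow> 0) at_top"
    by (rule filterlim_compose[OF exp_at_bot])
  then show ?thesis by (rule tendsto_mult_left_zero)
qed

theorem theorem2p3:
  fixes N :: nat and a b :: real
    and M :: "'w measure" and X :: "real \<Rightarrow> 'w \<Rightarrow> (nat \<Rightarrow> real)"
    and z :: "nat \<Rightarrow> real"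
  assumes "a \<ge> 0" and "b > 0"
    and "prob_space M"
    and "\<And>\<kappa>. \<kappa> > 0 \<Longrightarrow> X \<kappa> \<in> measurable M (lborelN N)"
    and "\<And>\<kappa>. \<kappa> > 0 \<Longrightarrow> distr M (lborelN N) (X \<kappa>) = jacobi_ensemble N a b \<kappa>"
    and "\<And>i j. i < j \<Longrightarrow> j < N \<Longrightarrow> z i < z j"
    and "{x. poly (jacobi_poly N (a + b - 1) (b - 1)) x = 0} = z ` {..<N}"
  shows "\<And>\<epsilon>. \<epsilon> > 0 \<Longrightarrow>
    ((\<lambda>\<kappa>. measure M {\<omega> \<in> space M. sqrt (\<Sum>i<N. (X \<kappa> \<omega> i - z i)^2) \<ge> \<epsilon>})
       \<longlongrightarrow> 0) at_top"
proof -
  fix eps :: real assume eps: "eps > 0"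
  define p where "p = (a + b) / 2"
  define q where "q = b / 2"
  have p: "p > 0" and q: "q > 0" using assms(1,2) by (auto simp: p_def q_def)
  have al: "a + b - 1 > -1" and be: "b - 1 > -1" using assms(1,2) by auto
  note cr = crit[where N=N and z=z and al="a+b-1" and be="b-1", OF al be]
  have zmono: "\<And>i j. i < j \<Longrightarrow> j < N \<Longrightarrow> z i < z j" by (rule assms(6))
  have zb: "-1 < z k" "z k < 1" if "k < N" for k using cr(1,2)[OF zmono assms(7) that] by auto
  have zcrit: "(\<Sum>j\<in>{..<N}-{k}. 1/(z k - z j)) = p / (1 - z k) - q / (1 + z k)" if "k < N" for k
    using cr(3)[OF zmono assms(7) that] by (simp add: p_def q_def)
  have zint: "intp N z" unfolding intp_def using zb zmono by auto
  define LZ where "LZ = LL N p q z"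
  define D where "D = p / 16 * eps^2"
  have D: "D > 0" using p eps by (simp add: D_def)
  obtain e where e: "e > 0" and H: "\<And>x. (\<forall>i<N. \<bar>x i - z i\<bar> \<le> e) \<Longrightarrow> intp N x \<and> LL N p q x \<ge> LZ - D / 2"
    using box_exists[OF zint less_imp_le[OF p] less_imp_le[OF q], of "D/2"] D unfolding LZ_def by auto
  define B where "B = PiE {..<N} (\<lambda>i. {z i - e .. z i + e})"
  define S where "S = {x \<in> space (lborelN N). eps \<le> sqrt (\<Sum>i<N. (x i - z i)^2)}"
  have B_sets: "B \<in> sets (lborelN N)" unfolding B_def by (intro sets_PiM_I_finite) auto
  have se: "sets (lborelN N) = sets (PiM {..<N} (\<lambda>_. borel))" by (intro sets_PiM_cong) simp_all
  have B_sets2: "B \<in> sets (PiM {..<N} (\<lambda>_. borel))" using B_sets se by simp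
  note [measurable] = B_sets B_sets2
  have S_sets: "S \<in> sets (lborelN N)" unfolding S_def by measurable
  have Bpos: "emeasure (lborelN N) B > 0" unfolding B_def by (rule box_pos[OF e])
  have inB: "\<forall>i<N. \<bar>x i - z i\<bar> \<le> e" if "x \<in> B" for x
  proof (intro allI impI)
    fix i assume "i < N"
    then have "x i \<in> {z i - e .. z i + e}" using that unfolding B_def PiE_iff by blast
    then show "\<bar>x i - z i\<bar> \<le> e" by (simp add: abs_le_iff)
  qed
  have ens: "prob_space (jacobi_ensemble N a b k)" if "k > 0" for k
    unfolding assms(5)[OF that, symmetric] by (rule prob_space.prob_space_distr[OF assms(3) assms(4)[OF that]])
  define n1 where "n1 = jacobi_norm N a b 1"
  have n1: "n1 > 0" "(\<integral>\<^sup>+ x. ennreal (jacobi_dens N a b 1 x) \<partial>lborelN N) = ennreal n1"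
    using norm_facts[OF ens[of 1]] unfolding n1_def by auto
  define JB where "JB = (\<integral>\<^sup>+ x. ennreal (jacobi_dens N a b 1 x) * indicator B x \<partial>lborelN N)"
  have JBle: "JB \<le> ennreal n1" unfolding JB_def n1(2)[symmetric]
    by (intro nn_integral_mono) (simp add: indicator_def)
  have dpos: "jacobi_dens N a b 1 x > 0" if "x \<in> B" for x
  proof -
    have "intp N x" using H[OF inB[OF that]] by simp
    then show ?thesis by (simp add: dens_int)
  qed
  have JB0: "JB \<noteq> 0"
  proof
    assume "JB = 0"
    then have "AE x in lborelN N. ennreal (jacobi_dens N a b 1 x) * indicator B x = 0"
      unfolding JB_def using B_sets B_sets2 by (subst nn_integral_0_iff_AE[symmetric]) measurable
    then have ae: "AE x in lborelN N. x \<notin> B"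
      by (rule eventually_mono) (use dpos in \<open>fastforce simp: indicator_def\<close>)
    have sb: "{x \<in> space (lborelN N). \<not> x \<notin> B} = B" using sets.sets_into_space[OF B_sets] by auto
    have "emeasure (lborelN N) B = 0" using AE_iff_measurable[OF B_sets sb] ae by simp
    then show False using Bpos by simp
  qed
  define jb where "jb = enn2real JB"
  have "JB < top" using JBle by (rule le_less_trans) simp
  then have JBjb: "JB = ennreal jb" unfolding jb_def by simp
  have "ennreal jb \<noteq> 0" using JB0 JBjb by simp
  then have jb: "jb > 0" by (simp add: ennreal_eq_0_iff)
  define C where "C = n1 / jb"
  have bound: "measure M {\<omega> \<in> space M. sqrt (\<Sum>i<N. (X k \<omega> i - z i)^2) \<ge> eps} \<le> exp (- ((k - 1) * (D / 2))) * C"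
    if k: "k \<ge> 1" for k
  proof -
    have k0: "k > 0" using k by simp
    define nk where "nk = jacobi_norm N a b k"
    have nk: "nk > 0" "(\<integral>\<^sup>+ x. ennreal (jacobi_dens N a b k x) \<partial>lborelN N) = ennreal nk"
      using norm_facts[OF ens[OF k0]] unfolding nk_def by auto
    define E1 where "E1 = exp ((k - 1) * (LZ - D))"
    define E2 where "E2 = exp ((k - 1) * (LZ - D / 2))"
    have meq: "measure M {\<omega> \<in> space M. sqrt (\<Sum>i<N. (X k \<omega> i - z i)^2) \<ge> eps} = measure (jacobi_ensemble N a b k) S"
    proof -
      have "measure (jacobi_ensemble N a b k) S = measure M (X k -` S \<inter> space M)"
        unfolding assms(5)[OF k0, symmetric] by (rule measure_distr[OF assms(4)[OF k0] S_sets])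
      also have "X k -` S \<inter> space M = {\<omega> \<in> space M. sqrt (\<Sum>i<N. (X k \<omega> i - z i)^2) \<ge> eps}"
        unfolding S_def using measurable_space[OF assms(4)[OF k0]] by auto
      finally show ?thesis by simp
    qed
    have ub_pt: "jacobi_dens N a b k x \<le> E1 * jacobi_dens N a b 1 x" if "x \<in> S" for x
      unfolding E1_def
    proof (rule dens_ub[OF k])
      assume ix: "intp N x"
      have "eps \<le> sqrt (\<Sum>i<N. (x i - z i)^2)" using that by (simp add: S_def)
      then have "eps^2 \<le> (sqrt (\<Sum>i<N. (x i - z i)^2))^2" using eps by (intro power_mono) auto
      then have e2: "eps^2 \<le> (\<Sum>i<N. (x i - z i)^2)" by (simp add: sum_nonneg)
      have "LL N p q x \<le> LZ - p / 16 * (\<Sum>i<N. (x i - z i)^2)"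
        unfolding LZ_def by (rule gap[OF p less_imp_le[OF q] zint ix zcrit])
      also have "\<dots> \<le> LZ - D" unfolding D_def using e2 p by (simp add: mult_left_mono)
      finally show "LL N ((a+b)/2) (b/2) x \<le> LZ - D" by (simp add: p_def q_def)
    qed
    have "emeasure (jacobi_ensemble N a b k) S
        = (\<integral>\<^sup>+ x. ennreal (jacobi_dens N a b k x / nk) * indicator S x \<partial>lborelN N)"
      unfolding nk_def by (rule emeasure_ens[OF S_sets])
    also have "\<dots> \<le> (\<integral>\<^sup>+ x. ennreal (E1 / nk) * ennreal (jacobi_dens N a b 1 x) \<partial>lborelN N)"
    proof (intro nn_integral_mono)
      fix x
      show "ennreal (jacobi_dens N a b k x / nk) * indicator S x \<le> ennreal (E1 / nk) * ennreal (jacobi_dens N a b 1 x)"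
      proof (cases "x \<in> S")
        case True
        have "jacobi_dens N a b k x / nk \<le> E1 / nk * jacobi_dens N a b 1 x"
          using ub_pt[OF True] nk(1) by (simp add: divide_right_mono)
        then have "ennreal (jacobi_dens N a b k x / nk) \<le> ennreal (E1 / nk * jacobi_dens N a b 1 x)"
          by (rule ennreal_leI)
        also have "\<dots> = ennreal (E1 / nk) * ennreal (jacobi_dens N a b 1 x)"
          using nk(1) by (intro ennreal_mult) (auto simp: E1_def dens_nonneg)
        finally show ?thesis using True by simp
      qed simp
    qed
    also have "\<dots> = ennreal (E1 / nk) * ennreal n1"
      by (subst nn_integral_cmult) (measurable, simp add: n1(2))
    also have "\<dots> = ennreal (E1 / nk * n1)" using nk(1) n1(1) by (intro ennreal_mult[symmetric]) (auto simp: E1_def)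
    finally have "ennreal (measure (jacobi_ensemble N a b k) S) \<le> ennreal (E1 / nk * n1)"
      using finite_measure.emeasure_eq_measure[OF prob_space.finite_measure[OF ens[OF k0]]] by simp
    then have m1: "measure (jacobi_ensemble N a b k) S \<le> E1 / nk * n1"
      using nk(1) n1(1) by (simp add: E1_def)
    have "ennreal (E2 * jb) = ennreal E2 * JB" unfolding JBjb using jb by (simp add: E2_def ennreal_mult)
    also have "\<dots> = (\<integral>\<^sup>+ x. ennreal E2 * (ennreal (jacobi_dens N a b 1 x) * indicator B x) \<partial>lborelN N)"
      unfolding JB_def using B_sets B_sets2 by (subst nn_integral_cmult) measurable
    also have "\<dots> \<le> (\<integral>\<^sup>+ x. ennreal (jacobi_dens N a b k x) \<partial>lborelN N)"
    proof (intro nn_integral_mono)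
      fix x
      show "ennreal E2 * (ennreal (jacobi_dens N a b 1 x) * indicator B x) \<le> ennreal (jacobi_dens N a b k x)"
      proof (cases "x \<in> B")
        case True
        have hx: "intp N x \<and> LL N p q x \<ge> LZ - D / 2" using H[OF inB[OF True]] .
        have "E2 * jacobi_dens N a b 1 x \<le> jacobi_dens N a b k x"
          unfolding E2_def using dens_lb[OF k, of N x "LZ - D/2" a b] hx by (simp add: p_def q_def)
        then have "ennreal (E2 * jacobi_dens N a b 1 x) \<le> ennreal (jacobi_dens N a b k x)" by (rule ennreal_leI)
        then show ?thesis using True by (simp add: E2_def ennreal_mult dens_nonneg)
      qed simp
    qed
    also have "\<dots> = ennreal nk" by (rule nk(2))
    finally have m2: "E2 * jb \<le> nk" using nk(1) by simp
    have E12: "E1 / E2 = exp (- ((k - 1) * (D / 2)))"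
      unfolding E1_def E2_def by (simp add: exp_diff[symmetric] algebra_simps)
    have E2pos: "E2 > 0" unfolding E2_def by simp
    have "measure (jacobi_ensemble N a b k) S \<le> E1 / nk * n1" by (rule m1)
    also have "\<dots> \<le> E1 / (E2 * jb) * n1"
      using m2 nk(1) n1(1) E2pos jb by (intro mult_right_mono divide_left_mono) (auto simp: E1_def)
    also have "\<dots> = (E1 / E2) * C" unfolding C_def using E2pos jb by simp
    finally show ?thesis unfolding meq E12 .
  qed
  show "((\<lambda>\<kappa>. measure M {\<omega> \<in> space M. sqrt (\<Sum>i<N. (X \<kappa> \<omega> i - z i)^2) \<ge> eps}) \<longlongrightarrow> 0) at_top"
  proof (rule tendsto_sandwich[OF _ _ tendsto_const exp_tend[OF half_gt_zero[OF D], of C]])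
    show "eventually (\<lambda>k. 0 \<le> measure M {\<omega> \<in> space M. sqrt (\<Sum>i<N. (X k \<omega> i - z i)^2) \<ge> eps}) at_top"
      by simp
    show "eventually (\<lambda>k. measure M {\<omega> \<in> space M. sqrt (\<Sum>i<N. (X k \<omega> i - z i)^2) \<ge> eps} \<le> exp (- ((k - 1) * (D / 2))) * C) at_top"
      using eventually_ge_at_top[of 1] by eventually_elim (rule bound)
  qed
qed

end
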